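(* In any quiver, if $A$ is an ancestor of finite height of a normal vertex $B$, then both $A$ and $B$ are phylogenetic.
   Context: A quiver consists of a class of vertices and, for each ordered pair of vertices $(A,B)$, a set of edges $A\to B$ (loops and multiple edges allowed). An evolution of length $m\ge 0$ is a sequence $A_0\leftarrow A_1\leftarrow\cdots\leftarrow A_m$ of vertices together with edges $A_k\to A_{k-1}$ ($1\le k\le m$); $A_0$ is its initial and $A_m$ its terminal vertex. Write $A\le B$ ($A$ is an ancestor of $B$) if there is an evolution with initial vertex $A$ and terminal vertex $B$; $A,B$ are isotypic ($A\sim B$) if $A\le B$ and $B\le A$. A vertex $A$ is primitive if every ancestor of $A$ is isotypic to $A$. A full evolution for $X$ is an evolution with primitive initial vertex and terminal vertex $X$. The height $h(X)$ is the smallest length of a full evolution for $X$ ($\infty$ if none). A vertex $A_k$ ($0\le k<m$) of an evolution $A_0\leftarrow\cdots\leftarrow A_m$ is critical if $h(A_k)<\infty$ and $h(A_{k+1})=h(A_k)+1$. The critical ancestors of a vertex $B$ are the critical vertices of full evolutions terminating at $B$. $B$ is normal if any two critical ancestors of $B$ of equal height are isotypic. An evolution $\alpha=(A_0\leftarrow\cdots\leftarrow A_m)$ embeds in $\beta=(B_0\leftarrow\cdots\leftarrow B_n)$ if $m\le n$ and there are $0\le r_0<\cdots<r_m\le n$ with $A_k\sim B_{r_k}$. A universal evolution for $X$ is a full evolution for $X$ embedding in every full evolution for $X$; $X$ is phylogenetic if one exists. *)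

theory Defs
  imports Main "HOL-Library.Extended_Nat"
begin

text \<open>An evolution A_0 <- A_1 <- ... <- A_m is a pair (as, es) of a vertex list
  as = [A_0,...,A_m] and an edge list es = [e_1,...,e_m], where the edge es!k
  (the paper's e_(k+1)) goes from A_(k+1) to A_k.\<close>

type_synonym ('v,'e) evol = "'v list \<times> 'e list"

definition evolution :: "('e \<Rightarrow> 'v) \<Rightarrow> ('e \<Rightarrow> 'v) \<Rightarrow> ('v,'e) evol \<Rightarrow> bool" where
  "evolution src tgt ev \<longleftrightarrow>
     length (fst ev) = Suc (length (snd ev)) \<and>
     (\<forall>k < length (snd ev). src (snd ev ! k) = fst ev ! Suc k \<and> tgt (snd ev ! k) = fst ev ! k)"

definition evlen :: "('v,'e) evol \<Rightarrow> nat" where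
  "evlen ev = length (snd ev)"

definition initial :: "('v,'e) evol \<Rightarrow> 'v" where
  "initial ev = hd (fst ev)"

definition terminal :: "('v,'e) evol \<Rightarrow> 'v" where
  "terminal ev = last (fst ev)"

definition ancestor :: "('e \<Rightarrow> 'v) \<Rightarrow> ('e \<Rightarrow> 'v) \<Rightarrow> 'v \<Rightarrow> 'v \<Rightarrow> bool" where
  "ancestor src tgt A B \<longleftrightarrow>
     (\<exists>ev. evolution src tgt ev \<and> initial ev = A \<and> terminal ev = B)"

definition isotypic :: "('e \<Rightarrow> 'v) \<Rightarrow> ('e \<Rightarrow> 'v) \<Rightarrow> 'v \<Rightarrow> 'v \<Rightarrow> bool" where
  "isotypic src tgt A B \<longleftrightarrow> ancestor src tgt A B \<and> ancestor src tgt B A"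

definition primitive :: "('e \<Rightarrow> 'v) \<Rightarrow> ('e \<Rightarrow> 'v) \<Rightarrow> 'v \<Rightarrow> bool" where
  "primitive src tgt A \<longleftrightarrow> (\<forall>C. ancestor src tgt C A \<longrightarrow> isotypic src tgt C A)"

definition full_evolution :: "('e \<Rightarrow> 'v) \<Rightarrow> ('e \<Rightarrow> 'v) \<Rightarrow> 'v \<Rightarrow> ('v,'e) evol \<Rightarrow> bool" where
  "full_evolution src tgt X ev \<longleftrightarrow>
     evolution src tgt ev \<and> primitive src tgt (initial ev) \<and> terminal ev = X"

definition height :: "('e \<Rightarrow> 'v) \<Rightarrow> ('e \<Rightarrow> 'v) \<Rightarrow> 'v \<Rightarrow> enat" where
  "height src tgt X =
     (if \<exists>ev. full_evolution src tgt X ev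
      then enat (LEAST n. \<exists>ev. full_evolution src tgt X ev \<and> evlen ev = n)
      else \<infinity>)"

definition critical_at :: "('e \<Rightarrow> 'v) \<Rightarrow> ('e \<Rightarrow> 'v) \<Rightarrow> ('v,'e) evol \<Rightarrow> nat \<Rightarrow> bool" where
  "critical_at src tgt ev k \<longleftrightarrow>
     k < evlen ev \<and> height src tgt (fst ev ! k) < \<infinity> \<and>
     height src tgt (fst ev ! Suc k) = height src tgt (fst ev ! k) + 1"

definition critical_ancestors :: "('e \<Rightarrow> 'v) \<Rightarrow> ('e \<Rightarrow> 'v) \<Rightarrow> 'v \<Rightarrow> 'v set" where
  "critical_ancestors src tgt B =
     {fst ev ! k | ev k. full_evolution src tgt B ev \<and> critical_at src tgt ev k}"

definition normal :: "('e \<Rightarrow> 'v) \<Rightarrow> ('e \<Rightarrow> 'v) \<Rightarrow> 'v \<Rightarrow> bool" where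
  "normal src tgt B \<longleftrightarrow>
     (\<forall>C \<in> critical_ancestors src tgt B. \<forall>D \<in> critical_ancestors src tgt B.
        height src tgt C = height src tgt D \<longrightarrow> isotypic src tgt C D)"

definition embeds :: "('e \<Rightarrow> 'v) \<Rightarrow> ('e \<Rightarrow> 'v) \<Rightarrow> ('v,'e) evol \<Rightarrow> ('v,'e) evol \<Rightarrow> bool" where
  "embeds src tgt \<alpha> \<beta> \<longleftrightarrow>
     evlen \<alpha> \<le> evlen \<beta> \<and>
     (\<exists>r :: nat \<Rightarrow> nat. strict_mono_on {0..evlen \<alpha>} r \<and> r (evlen \<alpha>) \<le> evlen \<beta> \<and>
        (\<forall>k \<le> evlen \<alpha>. isotypic src tgt (fst \<alpha> ! k) (fst \<beta> ! r k)))"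

definition universal_evolution :: "('e \<Rightarrow> 'v) \<Rightarrow> ('e \<Rightarrow> 'v) \<Rightarrow> 'v \<Rightarrow> ('v,'e) evol \<Rightarrow> bool" where
  "universal_evolution src tgt X ev \<longleftrightarrow>
     full_evolution src tgt X ev \<and>
     (\<forall>ev'. full_evolution src tgt X ev' \<longrightarrow> embeds src tgt ev ev')"

definition phylogenetic :: "('e \<Rightarrow> 'v) \<Rightarrow> ('e \<Rightarrow> 'v) \<Rightarrow> 'v \<Rightarrow> bool" where
  "phylogenetic src tgt X \<longleftrightarrow> (\<exists>ev. universal_evolution src tgt X ev)"

end

theory Submission imports Defs begin

lemma evol_ne: "evolution src tgt ev \<Longrightarrow> fst ev \<noteq> []"
  by (auto simp: evolution_def)

lemma initial_nth: "evolution src tgt ev \<Longrightarrow> initial ev = fst ev ! 0"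
  by (simp add: initial_def hd_conv_nth evol_ne)

lemma terminal_nth: "evolution src tgt ev \<Longrightarrow> terminal ev = fst ev ! evlen ev"
  by (simp add: terminal_def last_conv_nth evol_ne) (simp add: evolution_def evlen_def)

definition pre :: "nat \<Rightarrow> ('v,'e) evol \<Rightarrow> ('v,'e) evol" where
  "pre k ev = (take (Suc k) (fst ev), take k (snd ev))"

lemma pre_evol:
  assumes "evolution src tgt ev" "k \<le> evlen ev"
  shows "evolution src tgt (pre k ev)" "evlen (pre k ev) = k"
    "\<And>i. i \<le> k \<Longrightarrow> fst (pre k ev) ! i = fst ev ! i"
  using assms by (auto simp: evolution_def pre_def evlen_def)

lemma pre_full:
  assumes "full_evolution src tgt X ev" "k \<le> evlen ev"
  shows "full_evolution src tgt (fst ev ! k) (pre k ev)" "evlen (pre k ev) = k"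
proof -
  have e: "evolution src tgt ev" using assms by (simp add: full_evolution_def)
  have "initial (pre k ev) = initial ev"
    using pre_evol[OF e assms(2)] by (simp add: initial_nth[OF pre_evol(1)[OF e assms(2)]] initial_nth[OF e])
  moreover have "terminal (pre k ev) = fst ev ! k"
    using pre_evol[OF e assms(2)] by (simp add: terminal_nth[OF pre_evol(1)[OF e assms(2)]])
  ultimately show "full_evolution src tgt (fst ev ! k) (pre k ev)"
    using assms pre_evol[OF e assms(2)] by (simp add: full_evolution_def)
  show "evlen (pre k ev) = k" using pre_evol[OF e assms(2)] by simp
qed

definition cat :: "('v,'e) evol \<Rightarrow> ('v,'e) evol \<Rightarrow> ('v,'e) evol" where
  "cat e1 e2 = (fst e1 @ tl (fst e2), snd e1 @ snd e2)"

lemma cat_evol: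
  assumes e1: "evolution src tgt e1" and e2: "evolution src tgt e2"
    and m: "terminal e1 = initial e2"
  shows "evolution src tgt (cat e1 e2)" "evlen (cat e1 e2) = evlen e1 + evlen e2"
    "initial (cat e1 e2) = initial e1" "terminal (cat e1 e2) = terminal e2"
    "\<And>i. i \<le> evlen e1 \<Longrightarrow> fst (cat e1 e2) ! i = fst e1 ! i"
proof -
  obtain as1 es1 where p1: "e1 = (as1, es1)" by fastforce
  obtain as2 es2 where p2: "e2 = (as2, es2)" by fastforce
  have l1: "length as1 = Suc (length es1)" and c1: "\<forall>k<length es1. src (es1 ! k) = as1 ! Suc k \<and> tgt (es1 ! k) = as1 ! k"
    using e1 p1 by (auto simp: evolution_def)
  have l2: "length as2 = Suc (length es2)" and c2: "\<forall>k<length es2. src (es2 ! k) = as2 ! Suc k \<and> tgt (es2 ! k) = as2 ! k"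
    using e2 p2 by (auto simp: evolution_def)
  have mm: "as1 ! length es1 = as2 ! 0"
    using m p1 p2 terminal_nth[OF e1] initial_nth[OF e2] by (simp add: evlen_def)
  have nth: "(as1 @ tl as2) ! i = (if i \<le> length es1 then as1 ! i else as2 ! (i - length es1))"
    if iL: "i \<le> length es1 + length es2" for i
  proof (cases "i \<le> length es1")
    case True then show ?thesis using l1 by (simp add: nth_append)
  next
    case False
    then have s: "Suc (i - Suc (length es1)) = i - length es1" by simp
    have "i - Suc (length es1) < length (tl as2)" using False iL l2 by simp
    then have "tl as2 ! (i - Suc (length es1)) = as2 ! (i - length es1)" using s by (simp add: nth_tl)
    then show ?thesis using l1 False by (simp add: nth_append)
  qed
  have LL: "length (as1 @ tl as2) = Suc (length (es1 @ es2))" using l1 l2 by simp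
  have CC: "src ((es1 @ es2) ! k) = (as1 @ tl as2) ! Suc k \<and> tgt ((es1 @ es2) ! k) = (as1 @ tl as2) ! k"
    if k: "k < length (es1 @ es2)" for k
    proof (cases "k < length es1")
      case True then show ?thesis using c1 l1 by (simp add: nth_append)
    next
      case False
      define d where "d = k - length es1"
      have d: "d < length es2" using k False by (simp add: d_def)
      have E: "(es1 @ es2) ! k = es2 ! d" using False by (simp add: nth_append d_def)
      have S: "(as1 @ tl as2) ! Suc k = as2 ! Suc d"
        using nth[of "Suc k"] k False by (simp add: d_def Suc_diff_le)
      have T: "(as1 @ tl as2) ! k = as2 ! d"
      proof (cases "k = length es1")
        case True then show ?thesis using nth[of k] k mm by (simp add: d_def)
      next
        case False2: False
        then show ?thesis using nth[of k] k False by (simp add: d_def)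
      qed
      show ?thesis using c2 d E S T by simp
    qed
  show ev: "evolution src tgt (cat e1 e2)"
    unfolding evolution_def cat_def p1 p2 fst_conv snd_conv using LL CC by blast
  show "evlen (cat e1 e2) = evlen e1 + evlen e2" by (simp add: evlen_def cat_def)
  show "initial (cat e1 e2) = initial e1"
    using initial_nth[OF ev] initial_nth[OF e1] nth[of 0] by (simp add: cat_def p1 p2)
  show "terminal (cat e1 e2) = terminal e2"
  proof -
    have "terminal (cat e1 e2) = (as1 @ tl as2) ! (length es1 + length es2)"
      using terminal_nth[OF ev] by (simp add: cat_def p1 p2 evlen_def)
    also have "\<dots> = as2 ! length es2"
      proof (cases "length es2 = 0")
      case True then show ?thesis using nth[of "length es1 + length es2"] mm by simp
    next
      case False then show ?thesis using nth[of "length es1 + length es2"] by simp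
    qed
    also have "\<dots> = terminal e2" using terminal_nth[OF e2] by (simp add: p2 evlen_def)
    finally show ?thesis .
  qed
  show "\<And>i. i \<le> evlen e1 \<Longrightarrow> fst (cat e1 e2) ! i = fst e1 ! i"
    using nth by (simp add: cat_def p1 p2 evlen_def)
qed

lemma triv_evol: "evolution src tgt ([X],[])" "initial ([X],[]) = X" "terminal ([X],[]) = X" "evlen ([X],[]) = 0"
  by (auto simp: evolution_def initial_def terminal_def evlen_def)

lemma isotypic_refl:
  fixes src tgt :: "'e \<Rightarrow> 'v"
  shows "isotypic src tgt X X"
proof -
  have "ancestor src tgt X X" unfolding ancestor_def
    by (rule exI[of _ "([X], []::'e list)"]) (simp add: triv_evol)
  then show ?thesis by (simp add: isotypic_def)
qed

lemma height_le: assumes "full_evolution src tgt X ev" shows "height src tgt X \<le> enat (evlen ev)"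
proof -
  have ex: "\<exists>ev. full_evolution src tgt X ev" using assms by blast
  have "(LEAST n. \<exists>ev. full_evolution src tgt X ev \<and> evlen ev = n) \<le> evlen ev"
    by (rule Least_le) (use assms in blast)
  then show ?thesis unfolding height_def using ex by simp
qed

lemma height_obtain: assumes "height src tgt X = enat n" shows "\<exists>ev. full_evolution src tgt X ev \<and> evlen ev = n"
proof -
  have ex: "\<exists>ev. full_evolution src tgt X ev" using assms unfolding height_def by (auto split: if_splits)
  then obtain e where "full_evolution src tgt X e" by blast
  then have "\<exists>n ev. full_evolution src tgt X ev \<and> evlen ev = n" by blast
  from LeastI_ex[OF this] have "\<exists>ev. full_evolution src tgt X ev \<and> evlen ev = (LEAST n. \<exists>ev. full_evolution src tgt X ev \<and> evlen ev = n)" .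
  moreover have "n = (LEAST n. \<exists>ev. full_evolution src tgt X ev \<and> evlen ev = n)" using assms ex unfolding height_def by simp
  ultimately show ?thesis by simp
qed

lemma height_fin: "full_evolution src tgt X ev \<Longrightarrow> \<exists>n. height src tgt X = enat n \<and> n \<le> evlen ev"
  using height_le by (metis enat_ile enat_ord_simps(1))

lemma primitive_height: "primitive src tgt X \<Longrightarrow> height src tgt X = 0"
proof -
  assume "primitive src tgt X"
  then have "full_evolution src tgt X ([X],[])" by (simp add: full_evolution_def initial_def terminal_def evolution_def)
  from height_le[OF this] have "height src tgt X \<le> 0" by (simp add: evlen_def zero_enat_def)
  then show ?thesis by simp
qed

lemma step_height:
  assumes e: "evolution src tgt ev" and k: "k < evlen ev" and h: "height src tgt (fst ev ! k) = enat j"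
  shows "height src tgt (fst ev ! Suc k) \<le> enat (Suc j)"
proof -
  obtain f where f: "full_evolution src tgt (fst ev ! k) f" "evlen f = j" using height_obtain[OF h] by blast
  define g where "g = ([fst ev ! k, fst ev ! Suc k], [snd ev ! k])"
  have ge: "evolution src tgt g" using e k by (auto simp: g_def evolution_def evlen_def less_Suc_eq)
  have fe: "evolution src tgt f" using f by (simp add: full_evolution_def)
  have m: "terminal f = initial g" using f by (simp add: full_evolution_def g_def initial_def)
  have "full_evolution src tgt (fst ev ! Suc k) (cat f g)"
    using cat_evol[OF fe ge m] f by (simp add: full_evolution_def g_def terminal_def)
  from height_le[OF this] show ?thesis using cat_evol[OF fe ge m] f by (simp add: g_def evlen_def)
qed

lemma chain_height:
  assumes e: "evolution src tgt ev" and h: "height src tgt (fst ev ! i) = enat a"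
    and ij: "i \<le> j" "j \<le> evlen ev"
  shows "\<exists>b. height src tgt (fst ev ! j) = enat b \<and> b \<le> a + (j - i)"
  using ij
proof (induction j)
  case 0 then show ?case using h by simp
next
  case (Suc j)
  show ?case
  proof (cases "i = Suc j")
    case True then show ?thesis using h by simp
  next
    case False
    then obtain b where b: "height src tgt (fst ev ! j) = enat b" "b \<le> a + (j - i)" using Suc by auto
    have "height src tgt (fst ev ! Suc j) \<le> enat (Suc b)" using step_height[OF e _ b(1)] Suc by simp
    then obtain c where c: "height src tgt (fst ev ! Suc j) = enat c" "c \<le> Suc b" by (metis enat_ile enat_ord_simps(1))
    have ij: "i \<le> j" using False Suc.prems by simp
    have "c \<le> a + (Suc j - i)" using c(2) b(2) ij by linarith
    then show ?thesis using c(1) by blast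
  qed
qed


lemma anc_full:
  assumes "ancestor src tgt A B" "full_evolution src tgt A f"
  shows "\<exists>g. full_evolution src tgt B g \<and> evlen f \<le> evlen g \<and> (\<forall>i \<le> evlen f. fst g ! i = fst f ! i)"
proof -
  obtain e where e: "evolution src tgt e" "initial e = A" "terminal e = B"
    using assms(1) unfolding ancestor_def by blast
  have fe: "evolution src tgt f" "terminal f = A" "primitive src tgt (initial f)"
    using assms(2) by (auto simp: full_evolution_def)
  have m: "terminal f = initial e" using e fe by simp
  note c = cat_evol[OF fe(1) e(1) m]
  have "full_evolution src tgt B (cat f e)" using c fe e by (simp add: full_evolution_def)
  then show ?thesis using c by (intro exI[of _ "cat f e"]) simp
qed

lemma crit_sub:
  assumes "ancestor src tgt A B"
  shows "critical_ancestors src tgt A \<subseteq> critical_ancestors src tgt B"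
proof
  fix C assume "C \<in> critical_ancestors src tgt A"
  then obtain ev k where ev: "C = fst ev ! k" "full_evolution src tgt A ev" "critical_at src tgt ev k"
    unfolding critical_ancestors_def by blast
  obtain g where g: "full_evolution src tgt B g" "evlen ev \<le> evlen g" "\<forall>i \<le> evlen ev. fst g ! i = fst ev ! i"
    using anc_full[OF assms ev(2)] by blast
  have k: "k < evlen ev" using ev(3) by (simp add: critical_at_def)
  have "critical_at src tgt g k" using ev(3) g k by (simp add: critical_at_def)
  moreover have "C = fst g ! k" using ev(1) g k by simp
  ultimately show "C \<in> critical_ancestors src tgt B" using g(1) unfolding critical_ancestors_def by blast
qed

lemma normal_anc: "ancestor src tgt A B \<Longrightarrow> normal src tgt B \<Longrightarrow> normal src tgt A"
proof -
  assume a: "ancestor src tgt A B" "normal src tgt B"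
  have s: "critical_ancestors src tgt A \<subseteq> critical_ancestors src tgt B" by (rule crit_sub[OF a(1)])
  show "normal src tgt A" unfolding normal_def
  proof (intro ballI impI)
    fix C D assume "C \<in> critical_ancestors src tgt A" "D \<in> critical_ancestors src tgt A"
      "height src tgt C = height src tgt D"
    then show "isotypic src tgt C D" using a(2) s unfolding normal_def by (meson subsetD)
  qed
qed

lemma height_anc:
  assumes "ancestor src tgt A B" "height src tgt A = enat a"
  shows "\<exists>b. height src tgt B = enat b"
proof -
  obtain f where f: "full_evolution src tgt A f" using height_obtain[OF assms(2)] by blast
  obtain g where "full_evolution src tgt B g" using anc_full[OF assms(1) f] by blast
  then show ?thesis using height_fin[of src tgt B g] by blast
qed

lemma full_height_fin:
  assumes "full_evolution src tgt X y" "i \<le> evlen y"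
  shows "\<exists>a. height src tgt (fst y ! i) = enat a \<and> a \<le> i"
  using height_fin[OF pre_full(1)[OF assms]] pre_full(2)[OF assms] by simp

lemma main:
  assumes nX: "normal src tgt X" and hX: "height src tgt X = enat n"
  shows "phylogenetic src tgt X"
proof -
  obtain x where x: "full_evolution src tgt X x" "evlen x = n" using height_obtain[OF hX] by blast
  have xe: "evolution src tgt x" using x by (simp add: full_evolution_def)
  have xn: "fst x ! n = X" using x terminal_nth[OF xe] by (simp add: full_evolution_def)
  have hx: "height src tgt (fst x ! k) = enat k" if k: "k \<le> n" for k
  proof -
    obtain a where a: "height src tgt (fst x ! k) = enat a" "a \<le> k"
      using full_height_fin[OF x(1)] k x(2) by blast
    obtain b where b: "height src tgt (fst x ! n) = enat b" "b \<le> a + (n - k)"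
      using chain_height[OF xe a(1) k] x(2) by auto
    have "b = n" using b(1) xn hX by simp
    then have "a = k" using a(2) b(2) k by linarith
    then show ?thesis using a by simp
  qed
  have cx: "fst x ! j \<in> critical_ancestors src tgt X" if j: "j < n" for j
  proof -
    have "critical_at src tgt x j"
      using j x(2) hx[of j] hx[of "Suc j"] by (simp add: critical_at_def one_enat_def)
    then show ?thesis using x(1) unfolding critical_ancestors_def by blast
  qed
  have "universal_evolution src tgt X x"
    unfolding universal_evolution_def
  proof (intro conjI allI impI)
    show "full_evolution src tgt X x" by fact
    fix y assume y: "full_evolution src tgt X y"
    have ye: "evolution src tgt y" using y by (simp add: full_evolution_def)
    define m where "m = evlen y"
    define ys where "ys = fst y"
    define hy where "hy i = (THE a. height src tgt (ys ! i) = enat a)" for i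
    have hy: "height src tgt (ys ! i) = enat (hy i)" if im: "i \<le> m" for i
    proof -
      obtain a where "height src tgt (ys ! i) = enat a"
        using full_height_fin[OF y] im by (auto simp: m_def ys_def)
      then show ?thesis by (simp add: hy_def)
    qed
    have hy0: "hy 0 = 0"
    proof -
      have "primitive src tgt (ys ! 0)" using y initial_nth[OF ye] by (simp add: full_evolution_def ys_def)
      then have "height src tgt (ys ! 0) = 0" by (rule primitive_height)
      then show ?thesis using hy[of 0] by (simp add: zero_enat_def)
    qed
    have hym: "hy m = n"
      using hy[of m] y terminal_nth[OF ye] hX by (simp add: full_evolution_def ys_def m_def)
    have hys: "hy (Suc i) \<le> Suc (hy i)" if "i < m" for i
      using step_height[OF ye, of i "hy i"] hy[of i] hy[of "Suc i"] that
      by (simp add: m_def ys_def)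
    have nm: "n \<le> m" using height_le[OF y] hX by (simp add: m_def)
    define P where "P j i \<longleftrightarrow> i \<le> m \<and> hy i \<le> j" for j i
    define r where "r j = (if j = n then m else Greatest (P j))" for j
    have Pb: "\<forall>i. P j i \<longrightarrow> i \<le> m" for j by (simp add: P_def)
    have rP: "P j (r j)" if "j < n" for j
      using GreatestI_nat[of "P j" 0 m] Pb[of j] that hy0 by (simp add: r_def P_def)
    have rG: "i \<le> r j" if "j < n" "P j i" for i j
      using Greatest_le_nat[of "P j" i m] Pb[of j] that by (simp add: r_def)
    have rm: "r j < m" if "j < n" for j
      using rP[OF that] hym that by (auto simp: P_def le_less)
    have rS: "hy (Suc (r j)) = Suc j \<and> hy (r j) = j" if j: "j < n" for j
    proof -
      have "\<not> P j (Suc (r j))" using rG[OF j, of "Suc (r j)"] by auto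
      then have "hy (Suc (r j)) > j" using rm[OF j] by (simp add: P_def)
      moreover have "hy (Suc (r j)) \<le> Suc (hy (r j))" using hys rm[OF j] by blast
      moreover have "hy (r j) \<le> j" using rP[OF j] by (simp add: P_def)
      ultimately show ?thesis by linarith
    qed
    have mono: "strict_mono_on {0..n} r"
    proof (rule strict_mono_onI)
      fix j j' assume jj: "j \<in> {0..n}" "j' \<in> {0..n}" "j < j'"
      then have j: "j < n" by simp
      show "r j < r j'"
      proof (cases "j' = n")
        case True then show ?thesis using rm[OF j] by (simp add: r_def)
      next
        case False
        then have j': "j' < n" using jj by simp
        have "P j' (Suc (r j))" using rS[OF j] rm[OF j] jj by (simp add: P_def)
        then show ?thesis using rG[OF j'] by fastforce
      qed
    qed
    have iso: "isotypic src tgt (fst x ! k) (fst y ! r k)" if k: "k \<le> n" for k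
    proof (cases "k = n")
      case True
      have "fst y ! r k = X" using True y terminal_nth[OF ye] by (simp add: r_def m_def full_evolution_def)
      then show ?thesis using True xn isotypic_refl by metis
    next
      case False
      then have k: "k < n" using k by simp
      have "critical_at src tgt y (r k)"
        using rm[OF k] rS[OF k] hy[of "r k"] hy[of "Suc (r k)"] rm[OF k]
        by (simp add: critical_at_def m_def ys_def one_enat_def)
      then have c1: "fst y ! r k \<in> critical_ancestors src tgt X"
        using y unfolding critical_ancestors_def by blast
      have "height src tgt (fst y ! r k) = enat k"
        using rS[OF k] hy[of "r k"] rm[OF k] by (simp add: ys_def)
      moreover have "height src tgt (fst x ! k) = enat k" using hx k by simp
      ultimately show ?thesis using nX cx[OF k] c1 unfolding normal_def by metis
    qed
    show "embeds src tgt x y"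
      unfolding embeds_def using x(2) nm mono iso by (auto simp: m_def r_def)
  qed
  then show ?thesis unfolding phylogenetic_def by blast
qed

theorem corollary5p2:
  fixes src tgt :: "'e \<Rightarrow> 'v" and A B :: 'v
  assumes "ancestor src tgt A B"
    and "height src tgt A < \<infinity>"
    and "normal src tgt B"
  shows "phylogenetic src tgt A \<and> phylogenetic src tgt B"
proof -
  obtain a where a: "height src tgt A = enat a" using assms(2) by (cases "height src tgt A") auto
  obtain b where b: "height src tgt B = enat b" using height_anc[OF assms(1) a] by blast
  have "normal src tgt A" using normal_anc[OF assms(1,3)] .
  then show ?thesis using main[OF _ a] main[OF assms(3) b] by blast
qed

end
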